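(* Let $X_3\subset\mathbb{A}^2_{\mathbb{Q}}$ be the plane curve defined by $x^2-(2C+16)x+(C^3+8C^2+16C+64)=0$. Then the morphism $\varphi\colon\mathbb{A}^1_{\mathbb{Q}}\to X_3$, $t\mapsto(t^3-t^2+7t+1,\,-t^2-7)$, is the normalization of $X_3$.
   Context: The curve $X_3$ is the zero locus of $\widetilde\delta_3(x,C)=\delta_3(x,C/4)$, where $\delta_3$ is the third multiplier polynomial of the family $z\mapsto z^2+c$; its defining equation is as given. *)

theory Defs
  imports "HOL-Computational_Algebra.Computational_Algebra"
begin

text \<open>Bivariate polynomials in Q[x,C] are represented as rat poly poly:
  outer variable x, inner (coefficient) variable C.\<close>

definition X3_poly :: "rat poly poly" where
  "X3_poly = [: [:64, 16, 8, 1:], [:-16, -2:], 1 :]"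

definition phi_x :: "rat poly" where
  "phi_x = [:1, 7, -1, 1:]"

definition phi_C :: "rat poly" where
  "phi_C = [:-7, 0, -1:]"

definition pullback :: "rat poly poly \<Rightarrow> rat poly" where
  "pullback g = poly (map_poly (\<lambda>c. pcompose c phi_C) g) phi_x"

text \<open>phi : A^1 -> X3 is the normalization of X3 (X3 integral, affine): the pullback
  induces an isomorphism of Q[x,C]/(f) onto its image A in Q[t] (kernel = (f)),
  Frac(A) = Q(t) (t is a quotient of elements of A), and Q[t] is exactly the integral
  closure of A in Q(t): a reduced fraction a/b is integral over A iff b is constant.\<close>
definition is_normalization_X3 :: bool where
  "is_normalization_X3 \<longleftrightarrow>
     (\<forall>g. pullback g = 0 \<longleftrightarrow> X3_poly dvd g) \<and>
     (\<exists>g h. pullback h \<noteq> 0 \<and> pullback h * [:0, 1:] = pullback g) \<and>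
     (\<forall>a b :: rat poly. b \<noteq> 0 \<longrightarrow> coprime a b \<longrightarrow>
        ((\<exists>n cs. a ^ n + (\<Sum>i<n. pullback (cs i) * a ^ i * b ^ (n - i)) = 0)
          \<longleftrightarrow> degree b = 0))"

end

theory Submission
  imports Defs "HOL-Computational_Algebra.Field_as_Ring" "HOL-Computational_Algebra.Polynomial_Factorial"
begin

lemma pb_pCons: "pullback (pCons a p) = pcompose a phi_C + phi_x * pullback p"
  by (simp add: pullback_def map_poly_pCons)

lemma pb_0[simp]: "pullback 0 = 0"
  by (simp add: pullback_def)

lemma pb_add: "pullback (p + q) = pullback p + pullback q"
proof (induction p arbitrary: q)
  case 0 then show ?case by simp
next
  case (pCons a p)
  obtain b q' where q: "q = pCons b q'" by (cases q) auto
  show ?case using pCons(2)[of q'] by (simp add: q pb_pCons pcompose_add algebra_simps)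
qed

lemma pb_const_mult: "pullback ([:a:] * q) = pcompose a phi_C * pullback q"
proof (induction q)
  case 0 then show ?case by simp
next
  case (pCons b q)
  have "[:a:] * pCons b q = pCons (a*b) ([:a:] * q)" by simp
  then show ?case using pCons(2) by (simp add: pb_pCons pcompose_mult algebra_simps)
qed

lemma pb_smult: "pullback (smult a q) = pcompose a phi_C * pullback q"
  using pb_const_mult[of a q] by simp

lemma pcomp_one[simp]: "pcompose (1::'a::comm_semiring_1 poly) q = 1"
  by (simp add: one_pCons pcompose_pCons)

lemma pcomp_mone[simp]: "pcompose (-1::'b::comm_ring_1 poly) q = -1"
  by (simp add: pcompose_uminus)

lemma pb_mult: "pullback (p * q) = pullback p * pullback q"
proof (induction p)
  case 0 then show ?case by simp
next
  case (pCons a p)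
  have "pCons a p * q = [:a:] * q + pCons 0 (p * q)" by (simp add: mult_pCons_left)
  then show ?case using pCons(2)
    by (simp add: pb_add pb_smult pb_pCons algebra_simps)
qed

lemma pb_const: "pullback [:c:] = pcompose c phi_C"
  by (simp add: pb_pCons)

lemma deg_phi_C: "degree phi_C = 2" by (simp add: phi_C_def)
lemma deg_phi_x: "degree phi_x = 3" by (simp add: phi_x_def)

lemma pb_X3: "pullback X3_poly = 0"
  by (simp add: X3_poly_def pb_pCons phi_x_def phi_C_def pcompose_pCons algebra_simps)

lemma deg1_form: "degree (r::'a::zero poly) \<le> 1 \<Longrightarrow> r = [:coeff r 0, coeff r 1:]"
  by (rule poly_eqI) (auto simp: coeff_pCons coeff_eq_0 split: nat.split)

lemma X3_div: "\<exists>q r0 r1. g = X3_poly * q + [:r0, r1:]"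
proof -
  obtain q r where qr: "pseudo_divmod g X3_poly = (q, r)" by (cases "pseudo_divmod g X3_poly")
  have nz: "X3_poly \<noteq> 0" by (simp add: X3_poly_def)
  have lc: "coeff X3_poly (degree X3_poly) = 1" "degree X3_poly = 2" by (simp_all add: X3_poly_def)
  from pseudo_divmod(1)[OF nz qr] lc have e: "g = X3_poly * q + r" by simp
  from pseudo_divmod(2)[OF nz qr] lc have "degree r \<le> 1" by auto
  then have "r = [:coeff r 0, coeff r 1:]" by (rule deg1_form)
  with e show ?thesis by metis
qed

lemma pb_rem_zero:
  assumes "pullback [:r0, r1:] = 0" shows "r0 = 0 \<and> r1 = 0"
proof -
  have e: "pcompose r0 phi_C + phi_x * pcompose r1 phi_C = 0"
    using assms by (simp add: pb_pCons)
  have r1: "r1 = 0"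
  proof (rule ccontr)
    assume "r1 \<noteq> 0"
    then have "pcompose r1 phi_C \<noteq> 0" using pcompose_eq_0[of r1 phi_C] deg_phi_C by auto
    moreover have "phi_x \<noteq> 0" using deg_phi_x by auto
    ultimately have d: "degree (phi_x * pcompose r1 phi_C) = 3 + 2 * degree r1"
      by (simp add: degree_mult_eq degree_pcompose deg_phi_x deg_phi_C)
    from e have "pcompose r0 phi_C = - (phi_x * pcompose r1 phi_C)"
      by (simp add: eq_neg_iff_add_eq_0)
    then have "degree (pcompose r0 phi_C) = degree (phi_x * pcompose r1 phi_C)" by simp
    then have "2 * degree r0 = 3 + 2 * degree r1"
      using d by (simp add: degree_pcompose deg_phi_C)
    then show False by presburger
  qed
  with e have "pcompose r0 phi_C = 0" by simp
  then have "r0 = 0" using pcompose_eq_0[of r0 phi_C] deg_phi_C by auto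
  with r1 show ?thesis by simp
qed

lemma part1: "pullback g = 0 \<longleftrightarrow> X3_poly dvd g"
proof
  assume z: "pullback g = 0"
  obtain q r0 r1 where g: "g = X3_poly * q + [:r0, r1:]" using X3_div by blast
  have "pullback [:r0, r1:] = 0" using z unfolding g by (simp add: pb_add pb_mult pb_X3)
  then have "r0 = 0 \<and> r1 = 0" by (rule pb_rem_zero)
  then show "X3_poly dvd g" using g by simp
next
  assume "X3_poly dvd g"
  then obtain k where "g = X3_poly * k" by (auto elim: dvdE)
  then show "pullback g = 0" by (simp add: pb_mult pb_X3)
qed

lemma part2: "\<exists>g h. pullback h \<noteq> 0 \<and> pullback h * [:0, 1:] = pullback g"
proof (intro exI conjI)
  show "pullback [:[:0,1:]:] \<noteq> 0"
    by (simp add: pb_pCons phi_C_def pcompose_pCons)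
  show "pullback [:[:0,1:]:] * [:0, 1:] = pullback [:[:8,1:], -1:]"
    by (simp add: pb_pCons phi_x_def phi_C_def pcompose_pCons algebra_simps)
qed

lemma ring_id: "((U::'a::comm_ring_1) + t * V) * C + (r0 + t * r1) = (U * C + r0) + t * (V * C + r1)"
  by (simp add: algebra_simps)

lemma decomp: "\<exists>u v. p = pcompose u phi_C + [:0,1:] * pcompose v phi_C"
proof (induction "degree p" arbitrary: p rule: less_induct)
  case less
  show ?case
  proof (cases "degree p \<le> 1")
    case True
    then have "p = [:coeff p 0, coeff p 1:]" by (rule deg1_form)
    then have "p = pcompose [:coeff p 0:] phi_C + [:0,1:] * pcompose [:coeff p 1:] phi_C"
    proof -
      have "pcompose [:coeff p 0:] phi_C + [:0,1:] * pcompose [:coeff p 1:] phi_C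
          = [:coeff p 0, coeff p 1:]" by simp
      then show ?thesis using \<open>p = [:coeff p 0, coeff p 1:]\<close> by simp
    qed
    then show ?thesis by blast
  next
    case False
    have nz: "phi_C \<noteq> 0" using deg_phi_C by auto
    define q where "q = p div phi_C"
    define r where "r = p mod phi_C"
    have pe: "p = q * phi_C + r" by (simp add: q_def r_def)
    have "degree q < degree p" unfolding q_def
      by (rule degree_div_less) (use False deg_phi_C in auto)
    then obtain u v where q: "q = pcompose u phi_C + [:0,1:] * pcompose v phi_C"
      using less by blast
    have "r = 0 \<or> degree r < 2" using degree_mod_less[OF nz, of p] deg_phi_C r_def by simp
    then have "degree r \<le> 1" by auto
    then have r: "r = [:coeff r 0, coeff r 1:]" by (rule deg1_form)
    have "p = pcompose (u * [:0,1:] + [:coeff r 0:]) phi_C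
              + [:0,1:] * pcompose (v * [:0,1:] + [:coeff r 1:]) phi_C"
    proof -
      have h01: "pcompose [:0,1:] phi_C = phi_C" by (simp add: pcompose_pCons)
      have A: "pcompose (u * [:0,1:] + [:coeff r 0:]) phi_C = pcompose u phi_C * phi_C + [:coeff r 0:]"
        by (simp only: pcompose_add pcompose_mult pcompose_const h01)
      have B: "pcompose (v * [:0,1:] + [:coeff r 1:]) phi_C = pcompose v phi_C * phi_C + [:coeff r 1:]"
        by (simp only: pcompose_add pcompose_mult pcompose_const h01)
      have R: "r = [:coeff r 0:] + [:0,1:] * [:coeff r 1:]"
        using r by simp
      have "p = (pcompose u phi_C + [:0,1:] * pcompose v phi_C) * phi_C
                + ([:coeff r 0:] + [:0,1:] * [:coeff r 1:])"
        using pe q R by metis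
      also have "\<dots> = (pcompose u phi_C * phi_C + [:coeff r 0:])
                + [:0,1:] * (pcompose v phi_C * phi_C + [:coeff r 1:])"
        by (rule ring_id)
      finally show ?thesis unfolding A B .
    qed
    then show ?thesis by blast
  qed
qed

lemma part3_fwd:
  fixes a b :: "rat poly"
  assumes b: "b \<noteq> 0" and cop: "coprime a b"
    and eq: "a ^ n + (\<Sum>i<n. pullback (cs i) * a ^ i * b ^ (n - i)) = 0"
  shows "degree b = 0"
proof (cases n)
  case 0
  with eq show ?thesis by simp
next
  case (Suc m)
  have "b dvd (\<Sum>i<n. pullback (cs i) * a ^ i * b ^ (n - i))"
  proof (rule dvd_sum)
    fix i assume "i \<in> {..<n}"
    then have "n - i > 0" by auto
    then have "b dvd b ^ (n - i)" by (simp add: dvd_power)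
    then show "b dvd pullback (cs i) * a ^ i * b ^ (n - i)" by (rule dvd_mult)
  qed
  moreover have "a ^ n = - (\<Sum>i<n. pullback (cs i) * a ^ i * b ^ (n - i))"
    using eq by (simp add: eq_neg_iff_add_eq_0)
  ultimately have "b dvd a ^ n" by simp
  moreover have "coprime (a ^ n) b" using coprime_power_left_iff[of a n b] cop by blast
  ultimately have "is_unit b" using coprime_common_divisor[of "a ^ n" b b] by simp
  then show ?thesis using is_unit_iff_degree[OF b] by simp
qed

lemma smult_m2: "smult (-2) (X::rat poly) = - X - X"
proof -
  have "smult (-2) X = smult (-1 + -1) X" by simp
  also have "\<dots> = smult (-1) X + smult (-1) X" by (rule smult_add_left)
  also have "\<dots> = - X - X" by simp
  finally show ?thesis .
qed

lemma key_id: "((Uu::'a::comm_ring_1) + t * Vv)^2 + (Uu^2 - (t*t)*Vv^2)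
   + (-(Uu*(Uu+t*Vv)) - Uu*(Uu+t*Vv)) = 0"
  by (simp add: algebra_simps power2_eq_square)

lemma const_mult: "[:c:] * p = smult c p" by simp

lemma part3_bwd:
  fixes a b :: "rat poly"
  assumes b: "b \<noteq> 0" and d: "degree b = 0"
  shows "\<exists>n cs. a ^ n + (\<Sum>i<n. pullback (cs i) * a ^ i * b ^ (n - i)) = 0"
proof -
  obtain c where bc: "b = [:c:]" using d by (metis degree_eq_zeroE)
  with b have c: "c \<noteq> 0" by simp
  obtain u v where a: "a = pcompose u phi_C + [:0,1:] * pcompose v phi_C" using decomp by blast
  define U where "U = pcompose u phi_C"
  define V where "V = pcompose v phi_C"
  define T where "T = pcompose [:-7,-1:] phi_C"
  have T: "T = [:0,1:] * [:0,1:]" by (simp add: T_def phi_C_def pcompose_pCons)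
  define cs where "cs = (\<lambda>i::nat. if i = 0 then [:smult (1/c^2) (u^2 - [:-7,-1:]*v^2):]
     else [:smult (-2/c) u:])"
  have "pullback (cs 0) = smult (1/c^2) (pcompose (u^2 - [:-7,-1:]*v^2) phi_C)"
    by (simp add: cs_def pb_const pcompose_smult)
  also have "pcompose (u^2 - [:-7,-1:]*v^2) phi_C = U^2 - T * V^2"
    unfolding U_def V_def T_def by (simp only: pcompose_diff pcompose_mult power2_eq_square)
  finally have p0: "pullback (cs 0) = smult (1/c^2) (U^2 - T * V^2)" .
  have p1: "pullback (cs 1) = smult (-2/c) U"
    by (simp add: cs_def pb_const pcompose_smult pcompose_uminus U_def)
  have s: "(\<Sum>i<2. pullback (cs i) * a ^ i * b ^ (2 - i)) =
      pullback (cs 0) * b^2 + pullback (cs 1) * a * b"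
    by (simp add: numeral_2_eq_2)
  have bb: "b^2 = [:c^2:]" "b = [:c:]" using bc by (simp_all add: power2_eq_square)
  have e1: "[:c:]^2 = [:c^2:]" by (simp add: power2_eq_square)
  have "pullback (cs 0) * b^2 = smult (c^2) (pullback (cs 0))"
    unfolding bc e1 by (subst mult.commute) simp
  also have "\<dots> = U^2 - T * V^2"
  proof -
    have cc: "c^2 * (1/c^2) = 1" using c by simp
    show ?thesis by (simp only: p0 smult_smult cc smult_1_left)
  qed
  finally have "pullback (cs 0) * b^2 = U^2 - T * V^2" .
  moreover have "pullback (cs 1) * a * b = - (U * a) - U * a"
  proof -
    have cc: "c * (-2/c) = -2" using c by simp
    have "pullback (cs 1) * a * b = smult (-2/c) U * a * [:c:]" by (simp only: p1 bc)
    also have "\<dots> = [:c:] * (smult (-2/c) U * a)" by (rule mult.commute)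
    also have "\<dots> = smult c (smult (-2/c) U * a)" by (rule const_mult)
    also have "\<dots> = smult (-2) (U * a)" by (simp only: mult_smult_left smult_smult cc)
    also have "\<dots> = - (U * a) - U * a" by (rule smult_m2)
    finally show ?thesis .
  qed
  ultimately have "a ^ 2 + (\<Sum>i<2. pullback (cs i) * a ^ i * b ^ (2 - i))
      = a^2 + (U^2 - T * V^2) + (- (U * a) - U * a)" by (simp add: s)
  also have "\<dots> = 0"
    unfolding a U_def[symmetric] V_def[symmetric] T by (rule key_id)
  finally show ?thesis by blast
qed

theorem lemma2p6:
  shows "is_normalization_X3"
  unfolding is_normalization_X3_def
proof (intro conjI allI impI)
  fix g show "(pullback g = 0) = (X3_poly dvd g)" by (rule part1)
next
  show "\<exists>g h. pullback h \<noteq> 0 \<and> pullback h * [:0, 1:] = pullback g" by (rule part2)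
next
  fix a b :: "rat poly"
  assume b: "b \<noteq> 0" and cop: "coprime a b"
  show "(\<exists>n cs. a ^ n + (\<Sum>i<n. pullback (cs i) * a ^ i * b ^ (n - i)) = 0) = (degree b = 0)"
  proof
    assume "\<exists>n cs. a ^ n + (\<Sum>i<n. pullback (cs i) * a ^ i * b ^ (n - i)) = 0"
    then obtain n cs where "a ^ n + (\<Sum>i<n. pullback (cs i) * a ^ i * b ^ (n - i)) = 0" by blast
    then show "degree b = 0" by (rule part3_fwd[OF b cop])
  next
    assume "degree b = 0"
    then show "\<exists>n cs. a ^ n + (\<Sum>i<n. pullback (cs i) * a ^ i * b ^ (n - i)) = 0"
      by (rule part3_bwd[OF b])
  qed
qed

end
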